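(* Let $0\le\beta\le1$ and $f\in\mathcal{A}_{\beta}$ with $f(z)=z+\sum_{n=2}^{\infty}a_nz^n$, and let $\gamma_1=\frac12a_2$ and $\gamma_2=\frac12\left(a_3-\frac12a_2^2\right)$ be its first two logarithmic coefficients. Then $$-\frac{1}{\sqrt{5-6\beta+2\beta^2}}\le|\gamma_2|-|\gamma_1|\le\frac{1}{3-2\beta}.$$ Both inequalities are sharp.
   Context: $\mathbb{D}=\{z\in\mathbb{C}:|z|<1\}$. For $\beta\in[0,1]$, $\mathcal{A}_{\beta}$ is the set of analytic functions $f$ on $\mathbb{D}$ with $f(0)=0$, $f'(0)=1$ (so $f(z)=z+\sum_{n\ge2}a_nz^n$) such that $\operatorname{Re}\big(\beta f(z)/z+(1-\beta)f'(z)\big)>0$ for all $z\in\mathbb{D}$. The logarithmic coefficients $\gamma_n$ are defined by $\log\frac{f(z)}{z}=2\sum_{n\ge1}\gamma_nz^n$ near $0$ (with $\log1=0$), which gives $\gamma_1=a_2/2$, $\gamma_2=\frac12(a_3-\frac12a_2^2)$. Sharpness: the upper bound is attained by $f$ with $\beta f(z)/z+(1-\beta)f'(z)=\frac{1+z^2}{1-z^2}$, the lower bound by $f$ with $\beta f(z)/z+(1-\beta)f'(z)=\frac{1-z^2}{1-\frac{2(2-\beta)}{\sqrt{5-6\beta+2\beta^2}}z+z^2}$. *)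

theory Defs
  imports "HOL-Complex_Analysis.Complex_Analysis"
begin

text \<open>At z = 0 the quotient f(z)/z is
  understood by its removable extension (value f'(0) = 1), where the condition reads
  Re 1 = 1 > 0 automatically; hence it is imposed only for z \<noteq> 0.\<close>
definition A_beta :: "real \<Rightarrow> (complex \<Rightarrow> complex) \<Rightarrow> bool" where
  "A_beta \<beta> f \<longleftrightarrow> f holomorphic_on ball 0 1 \<and> f 0 = 0 \<and> deriv f 0 = 1 \<and>
     (\<forall>z\<in>ball 0 1. z \<noteq> 0 \<longrightarrow>
        Re (of_real \<beta> * (f z / z) + of_real (1 - \<beta>) * deriv f z) > 0)"

definition taylor_coeff :: "(complex \<Rightarrow> complex) \<Rightarrow> nat \<Rightarrow> complex" where
  "taylor_coeff f n = (deriv ^^ n) f 0 / of_nat (fact n)"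

definition log_gamma1 :: "(complex \<Rightarrow> complex) \<Rightarrow> complex" where
  "log_gamma1 f = taylor_coeff f 2 / 2"

definition log_gamma2 :: "(complex \<Rightarrow> complex) \<Rightarrow> complex" where
  "log_gamma2 f = (taylor_coeff f 3 - (taylor_coeff f 2)^2 / 2) / 2"

end

theory Submission
  imports Defs "HOL-Complex_Analysis.Riemann_Mapping"
begin


lemma real_lower:
  fixes \<beta> x y :: real
  assumes b0: "0 \<le> \<beta>" and b1: "\<beta> \<le> 1" and x0: "0 \<le> x" and y0: "0 \<le> y"
    and yx: "y \<ge> x^2 * (5 - 6*\<beta> + 2*\<beta>^2) / (4 * (3 - 2*\<beta>) * (2 - \<beta>)^2) - 1 / (3 - 2*\<beta>)"
  shows "- 1 / sqrt (5 - 6 * \<beta> + 2 * \<beta>^2) \<le> y - x / (2 * (2 - \<beta>))"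
proof -
  define s where "s = 5 - 6*\<beta> + 2*\<beta>^2"
  define B where "B = 2 - \<beta>"
  define T where "T = 3 - 2*\<beta>"
  define r where "r = sqrt s"
  have B0: "B > 0" and T0: "T > 0" using b1 by (auto simp: B_def T_def)
  have sB: "s = B^2 + (1 - \<beta>)^2" unfolding s_def B_def by (simp add: power2_eq_square algebra_simps)
  have sT: "4 * s - T^2 = 11 - 12 * \<beta> + 4 * \<beta>^2" unfolding s_def T_def
    by (simp add: power2_eq_square algebra_simps)
  have "11 - 12 * \<beta> + 4 * \<beta>^2 = 2 + (3 - 2 * \<beta>)^2" by (simp add: power2_eq_square algebra_simps)
  hence sT': "T^2 \<le> 4 * s" using sT by (smt (verit) zero_le_power2)
  have s0: "s > 0" using sB B0 by (smt (verit) zero_le_power2 zero_less_power)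
  have r0: "r > 0" and rr: "r^2 = s" using s0 by (auto simp: r_def)
  have "B^2 \<le> s" using sB by simp
  hence Br: "B \<le> r" unfolding r_def by (rule real_le_rsqrt)
  have Tr: "T \<le> 2 * r"
  proof -
    have "T^2 \<le> (2*r)^2" using sT' rr by (simp add: power_mult_distrib)
    thus ?thesis using r0 T0 by (meson less_le power2_le_imp_le zero_le_mult_iff zero_le_numeral)
  qed
  have yx': "y \<ge> x^2 * s / (4 * T * B^2) - 1 / T" using yx by (simp add: s_def T_def B_def)
  show ?thesis
  proof (cases "x \<le> 2 * B / r")
    case True
    hence "x / (2 * B) \<le> 1 / r" using B0 r0 by (simp add: field_simps)
    thus ?thesis using y0 by (simp add: r_def s_def B_def)
  next
    case False
    define u where "u = x * r / (2 * B)"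
    have u1: "u > 1" using False B0 r0 by (simp add: u_def field_simps)
    have xu: "x = 2 * B * u / r" using B0 r0 by (simp add: u_def field_simps)
    have "x^2 * s / (4 * T * B^2) = u^2 / T"
      using B0 r0 T0 rr s0 by (simp add: xu field_simps power2_eq_square)
    hence y2: "y \<ge> (u^2 - 1) / T" using yx' by (simp add: diff_divide_distrib)
    have xb: "x / (2 * B) = u / r" using B0 r0 by (simp add: xu field_simps)
    have "(u - 1) * T \<le> (u - 1) * ((u + 1) * r)"
    proof (rule mult_left_mono)
      have "2 * r \<le> (u + 1) * r" using u1 r0 by (intro mult_right_mono) auto
      thus "T \<le> (u + 1) * r" using Tr by linarith
    qed (use u1 in auto)
    hence "(u - 1) / r \<le> (u^2 - 1) / T" using T0 r0
      by (simp add: field_simps power2_eq_square algebra_simps)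
    hence "- 1 / r \<le> (u^2 - 1) / T - u / r" by (simp add: diff_divide_distrib)
    also have "\<dots> \<le> y - x / (2 * B)" using y2 xb by simp
    finally show ?thesis by (simp add: r_def s_def B_def)
  qed
qed



lemma bounds:
  fixes \<beta> :: real and c1 c2 a2 a3 :: complex
  assumes b0: "0 \<le> \<beta>" and b1: "\<beta> \<le> 1"
    and car: "norm (c2 - c1^2/2) \<le> 2 - norm c1^2/2"
    and ha2: "c1 = (2 - of_real \<beta>) * a2" and ha3: "c2 = (3 - 2 * of_real \<beta>) * a3"
  shows "- 1 / sqrt (5 - 6 * \<beta> + 2 * \<beta>^2) \<le> norm ((a3 - a2^2/2)/2) - norm (a2/2)
        \<and> norm ((a3 - a2^2/2)/2) - norm (a2/2) \<le> 1 / (3 - 2 * \<beta>)"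
proof -
  define B where "B = 2 - \<beta>"
  define T where "T = 3 - 2*\<beta>"
  define K where "K = 1/(4*T) - 1/(4*B^2)"
  define D where "D = c2 - c1^2/2"
  define x where "x = norm c1"
  have B0: "B > 0" and T0: "T > 0" using b1 by (auto simp: B_def T_def)
  have K0: "K \<ge> 0"
  proof -
    have "B^2 - T = (1 - \<beta>)^2" by (simp add: B_def T_def power2_eq_square algebra_simps)
    hence "T \<le> B^2" by (smt (verit) zero_le_power2)
    hence "1/(4*B^2) \<le> 1/(4*T)" using T0 B0 by (intro divide_left_mono) auto
    thus ?thesis by (simp add: K_def)
  qed
  have cB: "(2 - of_real \<beta> :: complex) = of_real B" by (simp add: B_def)
  have cT: "(3 - 2 * of_real \<beta> :: complex) = of_real T" by (simp add: T_def)
  have a2e: "a2 = c1 / of_real B" using ha2 B0 by (simp add: cB)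
  have a3e: "a3 = c2 / of_real T" using ha3 T0 by (simp add: cT)
  have g2: "(a3 - a2^2/2)/2 = D * of_real (1/(2*T)) + c1^2 * of_real K"
    using B0 T0 by (simp add: a2e a3e D_def K_def field_simps power2_eq_square) 
  have g1: "norm (a2/2) = x / (2*B)" using B0 by (simp add: a2e x_def norm_divide)
  have nD: "norm D \<le> 2 - x^2/2" using car by (simp add: D_def x_def)
  have n1: "norm (D * of_real (1/(2*T))) = norm D / (2*T)" using T0 by (simp only: norm_mult norm_of_real) simp
  have n2: "norm (c1^2 * of_real K) = x^2 * K" using K0 by (simp add: norm_mult x_def norm_power)
  have up: "norm ((a3 - a2^2/2)/2) \<le> norm D / (2*T) + x^2 * K"
    unfolding g2 using norm_triangle_ineq[of "D * of_real (1/(2*T))" "c1^2 * of_real K"] n1 n2 by simp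
  have lo: "norm ((a3 - a2^2/2)/2) \<ge> x^2 * K - norm D / (2*T)"
    unfolding g2 using norm_diff_ineq[of "c1^2 * of_real K" "D * of_real (1/(2*T))"] n1 n2
    by (simp add: add.commute)
  have "norm D / (2*T) \<le> (2 - x^2/2) / (2*T)" using nD T0 by (simp add: divide_right_mono)
  hence "norm ((a3 - a2^2/2)/2) \<le> (2 - x^2/2) / (2*T) + x^2 * K" using up by linarith
  also have "\<dots> = 1/T - x^2 / (4*B^2)" using T0 B0 by (simp add: K_def field_simps)
  also have "\<dots> \<le> 1/T" using B0 by simp
  finally have U0: "norm ((a3 - a2^2/2)/2) \<le> 1/T" .
  have "norm (a2/2) \<ge> 0" by (rule norm_ge_zero)
  hence "norm ((a3 - a2^2/2)/2) - norm (a2/2) \<le> 1/T" using U0 by linarith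
  hence U: "norm ((a3 - a2^2/2)/2) - norm (a2/2) \<le> 1 / (3 - 2 * \<beta>)"
    unfolding T_def .
  have Y0: "norm ((a3 - a2^2/2)/2) \<ge> x^2 * K - (2 - x^2/2) / (2*T)"
    using lo \<open>norm D / (2*T) \<le> (2 - x^2/2) / (2*T)\<close> by linarith
  have E1: "x^2 * K - (2 - x^2/2) / (2*T) = x^2 * (2*B^2 - T) / (4 * T * B^2) - 1 / T"
    using T0 B0 by (simp add: K_def field_simps power2_eq_square)
  have E2: "2*B^2 - T = 5 - 6*\<beta> + 2*\<beta>^2"
    by (simp add: B_def T_def power2_eq_square algebra_simps)
  have Y: "norm ((a3 - a2^2/2)/2) \<ge> x^2 * (5 - 6*\<beta> + 2*\<beta>^2) / (4 * (3 - 2*\<beta>) * (2 - \<beta>)^2) - 1 / (3 - 2*\<beta>)"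
    using Y0 unfolding E1 E2 unfolding T_def B_def .
  have L: "- 1 / sqrt (5 - 6 * \<beta> + 2 * \<beta>^2) \<le> norm ((a3 - a2^2/2)/2) - x / (2 * (2 - \<beta>))"
    by (rule real_lower[OF b0 b1 _ _ Y]) (auto simp: x_def)
  show ?thesis using U L g1[unfolded B_def] by linarith
qed



lemma schwarz_pick0:
  assumes holg: "g holomorphic_on ball 0 1" and le1: "\<And>z. z \<in> ball 0 1 \<Longrightarrow> norm (g z) \<le> 1"
  shows "norm (deriv g 0) \<le> 1 - norm (g 0) ^ 2"
proof (cases "norm (g 0) = 1")
  case True
  have "g constant_on ball 0 1"
    by (rule Schwarz2[OF holg, of 1 0]) (use le1 True in \<open>auto simp: dist_norm\<close>)
  then obtain c where c: "\<And>z. z \<in> ball 0 1 \<Longrightarrow> g z = c" by (auto simp: constant_on_def)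
  have "eventually (\<lambda>z. z \<in> ball (0::complex) 1) (nhds 0)"
    by (intro eventually_nhds_in_open) auto
  hence "eventually (\<lambda>z. g z = c) (nhds 0)" by eventually_elim (use c in auto)
  hence "deriv g 0 = deriv (\<lambda>_. c) 0" by (intro deriv_cong_ev) auto
  thus ?thesis using True by simp
next
  case False
  define a where "a = g 0"
  have a1: "norm a < 1" using False le1[of 0] by (auto simp: a_def)
  have lt1: "norm (g z) < 1" if z: "z \<in> ball 0 1" for z
  proof (rule ccontr)
    assume "\<not> norm (g z) < 1"
    hence gz: "norm (g z) = 1" using le1[OF z] by auto
    have sub: "ball z (1 - norm z) \<subseteq> ball 0 1"
      using z by (simp add: ball_subset_ball_iff)
    have "g constant_on ball 0 1"
    proof (rule Schwarz2[OF holg, of "1 - norm z" z])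
      show "0 < 1 - norm z" using z by auto
      show "ball z (1 - cmod z) \<subseteq> ball 0 1" by (fact sub)
      fix y assume "norm (z - y) < 1 - norm z"
      hence "y \<in> ball 0 1" using sub by (auto simp: dist_norm)
      thus "norm (g y) \<le> norm (g z)" using le1 gz by auto
    qed
    then obtain c where c: "\<And>y. y \<in> ball 0 1 \<Longrightarrow> g y = c" by (auto simp: constant_on_def)
    have "g 0 = g z" using c z by auto
    thus False using False gz by simp
  qed
  define k where "k = (\<lambda>z. Moebius_function 0 a (g z))"
  have holk: "k holomorphic_on ball 0 1"
  proof -
    have "(Moebius_function 0 a \<circ> g) holomorphic_on ball 0 1"
      by (rule holomorphic_on_compose_gen[OF holg Moebius_function_holomorphic[OF a1]])
         (use lt1 in auto)
    thus ?thesis by (simp add: k_def o_def)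
  qed
  have k0: "k 0 = 0" by (simp add: k_def a_def Moebius_function_eq_zero)
  have kno: "norm (k z) < 1" if "norm z < 1" for z
    unfolding k_def using Moebius_function_norm_lt_1[OF a1, of "g z"] lt1 that by auto
  have dk: "norm (deriv k 0) \<le> 1"
    using Schwarz_Lemma(2)[OF holk k0 kno, of 0] by auto
  have ca: "1 - cnj a * a \<noteq> 0"
  proof -
    have "cnj a * a = of_real (norm a ^ 2)" by (subst complex_norm_square) (simp add: mult.commute)
    moreover have "norm a ^ 2 < 1" using a1 by (simp add: power_less_one_iff)
    ultimately show ?thesis by (metis less_irrefl of_real_eq_1_iff right_minus_eq)
  qed
  have dM: "((\<lambda>u. Moebius_function 0 a u) has_field_derivative 1 / (1 - cnj a * a)) (at a)"
  proof -
    have d1: "((\<lambda>u. u - a) has_field_derivative 1) (at a)"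
      using DERIV_diff[OF DERIV_ident DERIV_const[of a]] by simp
    have d2: "((\<lambda>u. 1 - cnj a * u) has_field_derivative - cnj a) (at a)"
      using DERIV_diff[OF DERIV_const[of 1] DERIV_cmult[OF DERIV_ident, of "cnj a"]] by simp
    have "((\<lambda>u. (u - a) / (1 - cnj a * u)) has_field_derivative
           (1 * (1 - cnj a * a) - (a - a) * (- cnj a)) / ((1 - cnj a * a) * (1 - cnj a * a))) (at a)"
      by (rule DERIV_divide[OF d1 d2 ca])
    thus ?thesis using ca by (simp add: Moebius_function_simple power2_eq_square)
  qed
  have dg: "(g has_field_derivative deriv g 0) (at 0)"
    using holomorphic_derivI[OF holg, of 0] by auto
  have "(k has_field_derivative (1 / (1 - cnj a * a)) * deriv g 0) (at 0)"
    unfolding k_def using DERIV_chain'[OF dg dM[unfolded a_def]] by (simp add: a_def)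
  hence "deriv k 0 = deriv g 0 / (1 - cnj a * a)" by (simp add: DERIV_imp_deriv)
  moreover have "cnj a * a = of_real (norm a ^ 2)" by (subst complex_norm_square) (simp add: mult.commute)
  ultimately have "deriv k 0 = deriv g 0 / of_real (1 - norm a ^ 2)" by simp
  moreover have "1 - norm a ^ 2 > 0" using a1 by (simp add: power_less_one_iff)
  ultimately have "norm (deriv k 0) = norm (deriv g 0) / (1 - norm a ^ 2)"
    by (simp only: norm_divide norm_of_real abs_of_pos)
  with dk \<open>1 - norm a ^ 2 > 0\<close> show ?thesis by (simp add: a_def field_simps)
qed

lemma carath:
  assumes holp: "p holomorphic_on ball 0 1" and p0: "p 0 = 1"
    and re: "\<And>z. z \<in> ball 0 1 \<Longrightarrow> Re (p z) > 0"
  shows "norm (fps_nth (fps_expansion p 0) 2 - (fps_nth (fps_expansion p 0) 1)^2/2)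
           \<le> 2 - norm (fps_nth (fps_expansion p 0) 1)^2/2"
proof -
  define w where "w = (\<lambda>z. (p z - 1) / (p z + 1))"
  have nz: "p z + 1 \<noteq> 0" if "z \<in> ball 0 1" for z
  proof
    assume "p z + 1 = 0"
    hence "Re (p z + 1) = 0" by simp
    thus False using re[OF that] by simp
  qed
  have holw: "w holomorphic_on ball 0 1"
    unfolding w_def using nz by (intro holomorphic_intros holp) auto
  have w0: "w 0 = 0" by (simp add: w_def p0)
  have wlt: "norm (w z) < 1" if "norm z < 1" for z
  proof -
    have z: "z \<in> ball 0 1" using that by simp
    have "norm (p z - 1) ^ 2 < norm (p z + 1) ^ 2"
      using re[OF z] unfolding cmod_power2 by (simp add: power2_eq_square algebra_simps)
    hence "norm (p z - 1) < norm (p z + 1)"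
      by (rule power_less_imp_less_base) simp
    thus ?thesis using nz[OF z] by (simp add: w_def norm_divide divide_less_eq)
  qed
  obtain g where holg: "g holomorphic_on ball 0 1" and wg: "\<And>z. norm z < 1 \<Longrightarrow> w z = z * g z"
      and dw: "deriv w 0 = g 0"
    using Schwarz3[OF holw w0] by blast
  have gle: "norm (g z) \<le> 1" if z: "z \<in> ball 0 1" for z
  proof (cases "z = 0")
    case True
    thus ?thesis using Schwarz_Lemma(2)[OF holw w0 wlt, of 0] dw by auto
  next
    case False
    have "norm (w z) \<le> norm z" using Schwarz_Lemma(1)[OF holw w0 wlt, of z] z by auto
    hence "norm z * norm (g z) \<le> norm z * 1" using wg[of z] z by (simp add: norm_mult)
    thus ?thesis using False by (simp add: mult_le_cancel_left)
  qed
  have pick: "norm (deriv g 0) \<le> 1 - norm (g 0) ^ 2"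
    by (rule schwarz_pick0[OF holg gle])
  define P where "P = fps_expansion p 0"
  define G where "G = fps_expansion g 0"
  have hP: "p has_fps_expansion P" unfolding P_def
    by (rule has_fps_expansion_fps_expansion[OF _ _ holp]) auto
  have hG: "g has_fps_expansion G" unfolding G_def
    by (rule has_fps_expansion_fps_expansion[OF _ _ holg]) auto
  have e1: "(\<lambda>z. p z * (1 - z * g z)) has_fps_expansion P * (1 - fps_X * G)"
    by (intro has_fps_expansion_mult has_fps_expansion_diff hP hG has_fps_expansion_fps_X
        has_fps_expansion_1)
  have e2: "(\<lambda>z. 1 + z * g z) has_fps_expansion 1 + fps_X * G"
    by (intro has_fps_expansion_mult has_fps_expansion_add hP hG has_fps_expansion_fps_X
        has_fps_expansion_1)
  have ev: "eventually (\<lambda>z. z \<in> ball (0::complex) 1) (nhds 0)"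
    by (intro eventually_nhds_in_open) auto
  have evq: "eventually (\<lambda>z. p z * (1 - z * g z) = 1 + z * g z) (nhds 0)"
    using ev
  proof eventually_elim
    case (elim z)
    have "w z = z * g z" using wg elim by auto
    hence "(p z - 1) / (p z + 1) = z * g z" by (simp add: w_def)
    hence "p z - 1 = z * g z * (p z + 1)" using nz[OF elim] by (simp add: divide_eq_eq)
    thus ?case by (simp add: algebra_simps)
  qed
  have e1': "(\<lambda>z. 1 + z * g z) has_fps_expansion P * (1 - fps_X * G)"
    using e1 has_fps_expansion_cong[OF evq refl] by blast
  have feq: "P * (1 - fps_X * G) = 1 + fps_X * G"
    by (rule fps_expansion_unique_complex[OF e1' e2])
  have P0: "fps_nth P 0 = 1" by (simp add: P_def fps_expansion_def p0)
  have G0: "fps_nth G 0 = g 0" by (simp add: G_def fps_expansion_def)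
  have G1: "fps_nth G 1 = deriv g 0" by (simp add: G_def fps_expansion_def)
  have c1: "fps_nth (P * (1 - fps_X * G)) 1 = fps_nth (1 + fps_X * G) 1" using feq by simp
  have c2: "fps_nth (P * (1 - fps_X * G)) 2 = fps_nth (1 + fps_X * G) 2" using feq by simp
  have P1: "fps_nth P 1 = 2 * g 0"
    using c1 by (simp add: fps_mult_nth P0 G0 numeral_2_eq_2)
  have P2: "fps_nth P 2 = 2 * deriv g 0 + 2 * g 0 ^ 2"
    using c2 P1 G1 by (simp add: fps_mult_nth P0 G0 numeral_2_eq_2 power2_eq_square
       algebra_simps)
  have "fps_nth P 2 - (fps_nth P 1)^2/2 = 2 * deriv g 0"
    using P1 P2 by (simp add: power2_eq_square)
  hence "norm (fps_nth P 2 - (fps_nth P 1)^2/2) = 2 * norm (deriv g 0)" by (simp add: norm_mult)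
  also have "\<dots> \<le> 2 - 2 * norm (g 0) ^ 2" using pick by simp
  also have "\<dots> = 2 - norm (fps_nth P 1)^2/2" using P1 by (simp add: norm_mult power2_eq_square)
  finally show ?thesis by (simp add: P_def)
qed

lemma taylor_coeff_fps: "taylor_coeff f n = fps_nth (fps_expansion f 0) n"
  by (simp add: taylor_coeff_def fps_expansion_def)

lemma A_beta_coeffs:
  assumes A: "A_beta \<beta> f"
  obtains p where "p holomorphic_on ball 0 1" "p 0 = 1" "\<And>z. z \<in> ball 0 1 \<Longrightarrow> Re (p z) > 0"
    "fps_nth (fps_expansion p 0) 1 = (2 - of_real \<beta>) * taylor_coeff f 2"
    "fps_nth (fps_expansion p 0) 2 = (3 - 2 * of_real \<beta>) * taylor_coeff f 3"
proof -
  have holf: "f holomorphic_on ball 0 1" and f0: "f 0 = 0" and df0: "deriv f 0 = 1"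
    and re: "\<And>z. z \<in> ball 0 1 \<Longrightarrow> z \<noteq> 0 \<Longrightarrow>
        Re (of_real \<beta> * (f z / z) + of_real (1 - \<beta>) * deriv f z) > 0"
    using A by (auto simp: A_beta_def)
  obtain h where holh: "h holomorphic_on ball 0 1" and fh: "\<And>z. norm z < 1 \<Longrightarrow> f z = z * h z"
      and h0: "deriv f 0 = h 0"
    using Schwarz3[OF holf f0] by blast
  define p where "p = (\<lambda>z. of_real \<beta> * h z + of_real (1 - \<beta>) * deriv f z)"
  have holdf: "deriv f holomorphic_on ball 0 1" by (rule holomorphic_deriv[OF holf]) auto
  have holp: "p holomorphic_on ball 0 1" unfolding p_def
    by (intro holomorphic_intros holh holdf)
  have p0: "p 0 = 1" using h0 df0 by (simp add: p_def algebra_simps)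
  have rep: "Re (p z) > 0" if z: "z \<in> ball 0 1" for z
  proof (cases "z = 0")
    case True thus ?thesis using p0 by simp
  next
    case False
    have "h z = f z / z" using fh[of z] z False by auto
    thus ?thesis using re[OF z False] by (simp add: p_def)
  qed
  define F where "F = fps_expansion f 0"
  define H where "H = fps_expansion h 0"
  define P where "P = fps_expansion p 0"
  have hF: "f has_fps_expansion F" unfolding F_def
    by (rule has_fps_expansion_fps_expansion[OF _ _ holf]) auto
  have hH: "h has_fps_expansion H" unfolding H_def
    by (rule has_fps_expansion_fps_expansion[OF _ _ holh]) auto
  have hP: "p has_fps_expansion P" unfolding P_def
    by (rule has_fps_expansion_fps_expansion[OF _ _ holp]) auto
  have ev: "eventually (\<lambda>z. z \<in> ball (0::complex) 1) (nhds 0)"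
    by (intro eventually_nhds_in_open) auto
  have evf: "eventually (\<lambda>z. z * h z = f z) (nhds 0)"
    using ev by eventually_elim (use fh in auto)
  have e1: "(\<lambda>z. z * h z) has_fps_expansion fps_X * H"
    by (intro has_fps_expansion_mult hH has_fps_expansion_fps_X)
  have "f has_fps_expansion fps_X * H"
    using e1 has_fps_expansion_cong[OF evf refl] by blast
  hence FXH: "F = fps_X * H" by (rule fps_expansion_unique_complex[OF hF])
  have "p has_fps_expansion fps_const (of_real \<beta>) * H + fps_const (of_real (1 - \<beta>)) * fps_deriv F"
    unfolding p_def
    by (intro has_fps_expansion_add has_fps_expansion_cmult_left has_fps_expansion_deriv hH hF)
  hence PE: "P = fps_const (of_real \<beta>) * H + fps_const (of_real (1 - \<beta>)) * fps_deriv F"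
    by (rule fps_expansion_unique_complex[OF hP])
  have "fps_nth P 1 = (2 - of_real \<beta>) * fps_nth F 2"
    by (simp add: PE FXH numeral_2_eq_2 algebra_simps)
  moreover have "fps_nth P 2 = (3 - 2 * of_real \<beta>) * fps_nth F 3"
    by (simp add: PE FXH numeral_3_eq_3 numeral_2_eq_2 algebra_simps)
  ultimately show ?thesis using that[OF holp p0 rep]
    by (simp add: P_def F_def taylor_coeff_fps)
qed



lemma ereal_lt1: "(x::real) < 1 \<Longrightarrow> 1 \<le> R \<Longrightarrow> ereal x < R"
proof -
  assume "x < 1" "1 \<le> R"
  hence "ereal x < 1" by simp
  thus "ereal x < R" using \<open>1 \<le> R\<close> by (rule less_le_trans)
qed

lemma exists_f:
  fixes \<beta> :: real
  assumes b0: "0 \<le> \<beta>" and b1: "\<beta> \<le> 1"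
    and holp: "p holomorphic_on ball 0 1" and p0: "p 0 = 1"
    and re: "\<And>z. z \<in> ball 0 1 \<Longrightarrow> Re (p z) > 0"
  obtains f where "A_beta \<beta> f"
    "taylor_coeff f 2 = fps_nth (fps_expansion p 0) 1 / (2 - of_real \<beta>)"
    "taylor_coeff f 3 = fps_nth (fps_expansion p 0) 2 / (3 - 2 * of_real \<beta>)"
proof -
  define P where "P = fps_expansion p 0"
  define \<alpha> where "\<alpha> = 1 - \<beta>"
  have a0: "\<alpha> \<ge> 0" using b1 by (simp add: \<alpha>_def)
  have den: "1 + real n * \<alpha> > 0" for n using a0 by (simp add: add_pos_nonneg)
  define H where "H = Abs_fps (\<lambda>n. fps_nth P n / of_real (1 + real n * \<alpha>))"
  define F where "F = fps_X * H"
  have RP: "fps_conv_radius P \<ge> 1"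
  proof -
    have "p holomorphic_on eball 0 (ereal 1)" using holp by simp
    hence "fps_conv_radius P \<ge> ereal 1" unfolding P_def by (rule conv_radius_fps_expansion)
    thus ?thesis by (simp add: one_ereal_def)
  qed
  have RH: "fps_conv_radius H \<ge> 1"
    unfolding fps_conv_radius_def
  proof (rule conv_radius_geI_ex')
    fix r :: real assume r0: "0 < r" and r1: "ereal r < 1"
    have "ereal r < fps_conv_radius P" using r1 RP by (rule less_le_trans)
    hence "ereal (norm (of_real r :: complex)) < fps_conv_radius P"
      using r0 by simp
    hence sP: "summable (\<lambda>n. norm (fps_nth P n * (of_real r :: complex) ^ n))"
      unfolding fps_conv_radius_def by (rule abs_summable_in_conv_radius)
    show "summable (\<lambda>n. fps_nth H n * (of_real r :: complex) ^ n)"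
    proof (rule summable_comparison_test'[OF sP])
      fix n :: nat
      have "norm (fps_nth H n * (of_real r :: complex) ^ n)
            = norm (fps_nth P n * (of_real r :: complex) ^ n) / (1 + real n * \<alpha>)"
      proof -
        have nd: "norm (of_real (1 + real n * \<alpha>) :: complex) = 1 + real n * \<alpha>"
          by (simp only: norm_of_real abs_of_pos[OF den[of n]])
        show ?thesis by (simp only: H_def fps_nth_Abs_fps norm_mult norm_divide nd times_divide_eq_left)
      qed
      also have "\<dots> \<le> norm (fps_nth P n * (of_real r :: complex) ^ n)"
        using divide_left_mono[of 1 "1 + real n * \<alpha>" "norm (fps_nth P n * (of_real r :: complex) ^ n)"]
          den[of n] a0 by simp
      finally show "norm (fps_nth H n * (of_real r :: complex) ^ n)
            \<le> norm (fps_nth P n * (of_real r :: complex) ^ n)" .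
    qed
  qed
  have RF: "fps_conv_radius F \<ge> 1"
    using fps_conv_radius_mult[of "fps_X :: complex fps" H] RH by (simp add: F_def)
  have RdF: "fps_conv_radius (fps_deriv F) \<ge> 1"
    using fps_conv_radius_deriv[of F] RF by simp
  define f where "f = eval_fps F"
  have holf: "f holomorphic_on ball 0 1" unfolding f_def
    by (intro holomorphic_intros) (use RF in \<open>auto simp: subset_eq intro: ereal_lt1\<close>)
  have Rpos: "fps_conv_radius F > 0" using ereal_lt1[of 0, OF _ RF] by (simp add: zero_ereal_def)
  have tc: "taylor_coeff f n = fps_nth F n" for n
    using fps_nth_conv_deriv[OF Rpos, of n] by (simp add: taylor_coeff_def f_def)
  have f0: "f 0 = 0" by (simp add: f_def eval_fps_at_0 F_def)
  have P0: "fps_nth P 0 = 1" by (simp add: P_def fps_expansion_def p0)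
  have df0: "deriv f 0 = 1"
    using fps_nth_conv_deriv[OF Rpos, of 1] P0 by (simp add: f_def F_def H_def)
  have coef: "fps_const (of_real \<beta>) * H + fps_const (of_real (1 - \<beta>)) * fps_deriv F = P"
  proof (rule fps_ext)
    fix n :: nat
    have d: "(of_real (1 + real n * \<alpha>) :: complex) \<noteq> 0" using den[of n]
      by (metis less_irrefl of_real_eq_0_iff)
    have "fps_nth (fps_const (of_real \<beta>) * H + fps_const (of_real (1 - \<beta>)) * fps_deriv F) n
        = fps_nth H n * (of_real \<beta> + of_real (1 - \<beta>) * of_nat (n + 1))"
      by (simp add: F_def algebra_simps)
    also have "(of_real \<beta> + of_real (1 - \<beta>) * of_nat (n + 1) :: complex) = of_real (1 + real n * \<alpha>)"
      by (simp add: \<alpha>_def algebra_simps)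
    also have "fps_nth H n * \<dots> = fps_nth P n" using d by (simp add: H_def)
    finally show "fps_nth (fps_const (of_real \<beta>) * H + fps_const (of_real (1 - \<beta>)) * fps_deriv F) n
        = fps_nth P n" .
  qed
  have reA: "Re (of_real \<beta> * (f z / z) + of_real (1 - \<beta>) * deriv f z) > 0"
    if z: "z \<in> ball 0 1" "z \<noteq> 0" for z
  proof -
    have nz: "ereal (norm z) < 1" using z by simp
    have zH: "ereal (norm z) < fps_conv_radius H" using z RH by (intro ereal_lt1) auto
    have zF: "ereal (norm z) < fps_conv_radius F" using z RF by (intro ereal_lt1) auto
    have zdF: "ereal (norm z) < fps_conv_radius (fps_deriv F)" using z RdF by (intro ereal_lt1) auto
    have "f z = z * eval_fps H z" unfolding f_def F_def using zH
      by (subst eval_fps_mult) auto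
    hence fz: "f z / z = eval_fps H z" using z by simp
    have dfz: "deriv f z = eval_fps (fps_deriv F) z" unfolding f_def
      by (rule eval_fps_deriv[symmetric]) (use zF in auto)
    have "of_real \<beta> * (f z / z) + of_real (1 - \<beta>) * deriv f z
         = eval_fps (fps_const (of_real \<beta>) * H + fps_const (of_real (1 - \<beta>)) * fps_deriv F) z"
    proof -
      have rA: "ereal (norm z) < fps_conv_radius (fps_const (of_real \<beta>) * H)"
        using fps_conv_radius_mult[of "fps_const (of_real \<beta>)" H] zH
        by (simp add: less_le_trans)
      have rB: "ereal (norm z) < fps_conv_radius (fps_const (of_real (1 - \<beta>)) * fps_deriv F)"
        using fps_conv_radius_mult[of "fps_const (of_real (1 - \<beta>))" "fps_deriv F"] zdF
        by (simp add: less_le_trans)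
      have k1: "ereal (norm z) < fps_conv_radius (fps_const (of_real \<beta>) :: complex fps)" by simp
      have k2: "ereal (norm z) < fps_conv_radius (fps_const (of_real (1 - \<beta>)) :: complex fps)" by simp
      show ?thesis
        by (simp only: eval_fps_add[OF rA rB] eval_fps_mult[OF k1 zH] eval_fps_mult[OF k2 zdF]
          eval_fps_const fz dfz)
    qed
    also have "\<dots> = eval_fps P z" by (simp only: coef)
    also have "\<dots> = p z"
    proof -
      have "p holomorphic_on eball 0 (ereal 1)" using holp by simp
      from eval_fps_expansion'[OF this, of z] z show ?thesis by (simp add: P_def)
    qed
    finally show ?thesis using re[OF z(1)] by simp
  qed
  have A: "A_beta \<beta> f" unfolding A_beta_def using holf f0 df0 reA by blast
  have c2: "taylor_coeff f 2 = fps_nth P 1 / (2 - of_real \<beta>)"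
    by (simp add: tc F_def H_def numeral_2_eq_2 \<alpha>_def)
  have c3: "taylor_coeff f 3 = fps_nth P 2 / (3 - 2 * of_real \<beta>)"
    by (simp add: tc F_def H_def numeral_3_eq_3 numeral_2_eq_2 \<alpha>_def algebra_simps)
  show ?thesis using that[OF A] c2 c3 by (simp add: P_def)
qed



lemma q_re:
  fixes u :: complex
  assumes "norm u < 1"
  shows "Re ((1 + u) / (1 - u)) > 0"
proof -
  have u1: "1 - u \<noteq> 0" using assms by auto
  have "Re ((1 + u) / (1 - u)) = (Re (1 + u) * Re (1 - u) + Im (1 + u) * Im (1 - u)) / (norm (1 - u))^2"
    by (simp add: Re_divide cmod_power2)
  also have "Re (1 + u) * Re (1 - u) + Im (1 + u) * Im (1 - u) = 1 - (norm u)^2"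
    unfolding cmod_power2 by (simp add: power2_eq_square algebra_simps)
  finally have e: "Re ((1 + u) / (1 - u)) = (1 - (norm u)^2) / (norm (1 - u))^2" .
  have "(norm u)^2 < 1" using assms by (simp add: power_less_one_iff)
  moreover have "(norm (1 - u))^2 > 0" using u1 by simp
  ultimately show ?thesis unfolding e by (simp add: divide_pos_pos)
qed

lemma rat_coeffs:
  fixes p :: "complex \<Rightarrow> complex"
  assumes holp: "p holomorphic_on ball 0 1"
    and eq: "\<And>z. z \<in> ball 0 1 \<Longrightarrow> p z * (1 + d1 * z + d2 * z^2) = n0 + n1 * z + n2 * z^2"
  shows "fps_nth (fps_expansion p 0) 0 = n0"
    "fps_nth (fps_expansion p 0) 1 = n1 - d1 * n0"
    "fps_nth (fps_expansion p 0) 2 = n2 - d1 * (n1 - d1 * n0) - d2 * n0"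
proof -
  define P where "P = fps_expansion p 0"
  define D where "D = 1 + fps_const d1 * fps_X + fps_const d2 * fps_X ^ 2"
  define N where "N = fps_const n0 + fps_const n1 * fps_X + fps_const n2 * fps_X ^ 2"
  have hP: "p has_fps_expansion P" unfolding P_def
    by (rule has_fps_expansion_fps_expansion[OF _ _ holp]) auto
  have e1: "(\<lambda>z. p z * (1 + d1 * z + d2 * z^2)) has_fps_expansion P * D"
    unfolding D_def
    by (intro has_fps_expansion_mult has_fps_expansion_add hP has_fps_expansion_cmult_left
        has_fps_expansion_fps_X has_fps_expansion_fps_X_power has_fps_expansion_1)
  have e2: "(\<lambda>z. n0 + n1 * z + n2 * z^2) has_fps_expansion N"
    unfolding N_def
    by (intro has_fps_expansion_add has_fps_expansion_cmult_left has_fps_expansion_const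
        has_fps_expansion_fps_X has_fps_expansion_fps_X_power)
  have ev: "eventually (\<lambda>z. z \<in> ball (0::complex) 1) (nhds 0)"
    by (intro eventually_nhds_in_open) auto
  have evq: "eventually (\<lambda>z. p z * (1 + d1 * z + d2 * z^2) = n0 + n1 * z + n2 * z^2) (nhds 0)"
    using ev by eventually_elim (use eq in auto)
  have e1': "(\<lambda>z. n0 + n1 * z + n2 * z^2) has_fps_expansion P * D"
    using e1 has_fps_expansion_cong[OF evq refl] by blast
  have feq: "P * D = N" by (rule fps_expansion_unique_complex[OF e1' e2])
  have c0: "fps_nth (P * D) 0 = fps_nth N 0" using feq by simp
  have c1: "fps_nth (P * D) 1 = fps_nth N 1" using feq by simp
  have c2: "fps_nth (P * D) 2 = fps_nth N 2" using feq by simp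
  have P0: "fps_nth P 0 = n0" using c0 by (simp add: D_def N_def)
  have P1: "fps_nth P 1 = n1 - d1 * n0"
    using c1 P0 by (simp add: D_def N_def fps_mult_nth algebra_simps)
  have P2: "fps_nth P 2 = n2 - d1 * (n1 - d1 * n0) - d2 * n0"
  proof -
    have "fps_nth P 2 = n2 - d1 * fps_nth P 1 - d2 * n0"
      using c2 P0 by (simp add: D_def N_def fps_mult_nth numeral_2_eq_2 algebra_simps)
    thus ?thesis using P1 by simp
  qed
  show "fps_nth (fps_expansion p 0) 0 = n0" "fps_nth (fps_expansion p 0) 1 = n1 - d1 * n0"
    "fps_nth (fps_expansion p 0) 2 = n2 - d1 * (n1 - d1 * n0) - d2 * n0"
    using P0 P1 P2 by (simp_all add: P_def)
qed



lemma ext_upper: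
  fixes \<beta> :: real
  assumes b0: "0 \<le> \<beta>" and b1: "\<beta> \<le> 1"
  shows "\<exists>f. A_beta \<beta> f \<and> cmod (log_gamma2 f) - cmod (log_gamma1 f) = 1 / (3 - 2 * \<beta>)"
proof -
  define p where "p = (\<lambda>z::complex. (1 + z^2) / (1 - z^2))"
  have nz: "1 - z^2 \<noteq> 0" if "z \<in> ball 0 1" for z :: complex
  proof
    assume "1 - z^2 = 0"
    hence "z^2 = 1" by simp
    hence "norm (z^2) = 1" by simp
    moreover have "norm (z^2) < 1" using that by (simp add: norm_power power_less_one_iff)
    ultimately show False by simp
  qed
  have holp: "p holomorphic_on ball 0 1" unfolding p_def using nz
    by (intro holomorphic_intros) auto
  have p0: "p 0 = 1" by (simp add: p_def)
  have re: "Re (p z) > 0" if "z \<in> ball 0 1" for z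
    unfolding p_def using that by (intro q_re) (simp add: norm_power power_less_one_iff)
  have eq: "p z * (1 + 0 * z + (-1) * z^2) = 1 + 0 * z + 1 * z^2" if "z \<in> ball 0 1" for z
    using nz[OF that] by (simp add: p_def)
  note rc = rat_coeffs[OF holp eq]
  obtain f where A: "A_beta \<beta> f"
    and t2: "taylor_coeff f 2 = fps_nth (fps_expansion p 0) 1 / (2 - of_real \<beta>)"
    and t3: "taylor_coeff f 3 = fps_nth (fps_expansion p 0) 2 / (3 - 2 * of_real \<beta>)"
    using exists_f[OF b0 b1 holp p0 re] by blast
  have T0: "3 - 2 * \<beta> > 0" using b1 by simp
  have a2: "taylor_coeff f 2 = 0" using t2 rc by simp
  have a3: "taylor_coeff f 3 = of_real (2 / (3 - 2 * \<beta>))" using t3 rc by simp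
  have "log_gamma1 f = 0" by (simp add: log_gamma1_def a2)
  moreover have "log_gamma2 f = of_real (1 / (3 - 2 * \<beta>))"
  proof -
    have cT: "(3 - 2 * of_real \<beta> :: complex) \<noteq> 0"
    proof
      assume "(3 - 2 * of_real \<beta> :: complex) = 0"
      hence "(of_real (3 - 2 * \<beta>) :: complex) = 0" by simp
      thus False using T0 by (simp only: of_real_eq_0_iff)
    qed
    show ?thesis using cT by (simp add: log_gamma2_def a2 a3 field_simps)
  qed
  ultimately have "cmod (log_gamma2 f) - cmod (log_gamma1 f) = 1 / (3 - 2 * \<beta>)"
    using T0 by (simp only: norm_of_real norm_zero) simp
  thus ?thesis using A by blast
qed

lemma ext_lower:
  fixes \<beta> :: real
  assumes b0: "0 \<le> \<beta>" and b1: "\<beta> \<le> 1"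
  shows "\<exists>f. A_beta \<beta> f \<and>
            cmod (log_gamma2 f) - cmod (log_gamma1 f) = - 1 / sqrt (5 - 6 * \<beta> + 2 * \<beta>^2)"
proof -
  define s where "s = 5 - 6*\<beta> + 2*\<beta>^2"
  define B where "B = 2 - \<beta>"
  define T where "T = 3 - 2*\<beta>"
  define r where "r = sqrt s"
  define t where "t = B / r"
  have B0: "B > 0" and T0: "T > 0" using b1 by (auto simp: B_def T_def)
  have sB: "s = B^2 + (1 - \<beta>)^2" unfolding s_def B_def by (simp add: power2_eq_square algebra_simps)
  have sBT: "s = 2 * B^2 - T" unfolding s_def B_def T_def by (simp add: power2_eq_square algebra_simps)
  have s0: "s > 0" using sB B0 by (smt (verit) zero_le_power2 zero_less_power)
  have r0: "r > 0" and rr: "r^2 = s" using s0 by (auto simp: r_def)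
  have "B^2 \<le> s" using sB by simp
  hence Br: "B \<le> r" unfolding r_def by (rule real_le_rsqrt)
  have t0: "t > 0" and t1: "t \<le> 1" using B0 r0 Br by (auto simp: t_def)
  have tt: "t^2 = B^2 / s" using rr by (simp add: t_def power_divide)
  define w where "w = sqrt (1 - t^2)"
  have ww: "w^2 = 1 - t^2" using t1 t0 by (simp add: w_def power_le_one)
  define a where "a = Complex t w"
  define b where "b = cnj a"
  have ab: "a * b = 1"
  proof -
    have "a * b = of_real (t^2 + w^2)" by (simp add: a_def b_def complex_eq_iff power2_eq_square)
    thus ?thesis using ww by simp
  qed
  have apb: "a + b = of_real (2 * t)" by (simp add: a_def b_def complex_eq_iff)
  have na: "norm a = 1" using ww by (simp add: a_def cmod_def)
  have nb: "norm b = 1" using na by (simp add: b_def)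
  have nza: "1 - a * z \<noteq> 0" and nzb: "1 - b * z \<noteq> 0" if "z \<in> ball 0 1" for z
  proof -
    have "norm (a * z) < 1" "norm (b * z) < 1" using that na nb by (auto simp: norm_mult)
    thus "1 - a * z \<noteq> 0" "1 - b * z \<noteq> 0" by auto
  qed
  define p where "p = (\<lambda>z::complex. ((1 + a * z) / (1 - a * z) + (1 + b * z) / (1 - b * z)) / 2)"
  have holp: "p holomorphic_on ball 0 1" unfolding p_def using nza nzb
    by (intro holomorphic_intros) auto
  have p0: "p 0 = 1" by (simp add: p_def)
  have re: "Re (p z) > 0" if z: "z \<in> ball 0 1" for z
  proof -
    have "norm (a * z) < 1" "norm (b * z) < 1" using z na nb by (auto simp: norm_mult)
    hence "Re ((1 + a * z) / (1 - a * z)) > 0" "Re ((1 + b * z) / (1 - b * z)) > 0"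
      by (auto intro: q_re)
    thus ?thesis by (simp add: p_def)
  qed
  have eq: "p z * (1 + (- of_real (2 * t)) * z + 1 * z^2) = 1 + 0 * z + (-1) * z^2"
    if z: "z \<in> ball 0 1" for z
  proof -
    have den: "1 + (- of_real (2 * t)) * z + 1 * z^2 = (1 - a * z) * (1 - b * z)"
      using ab apb[symmetric] by (simp add: algebra_simps power2_eq_square)
    have "p z * ((1 - a * z) * (1 - b * z))
        = ((1 + a * z) * (1 - b * z) + (1 + b * z) * (1 - a * z)) / 2"
    proof -
      have e1: "(1 + a*z)/(1 - a*z) * (1 - a*z) = 1 + a*z" using nza[OF z] by simp
      have e2: "(1 + b*z)/(1 - b*z) * (1 - b*z) = 1 + b*z" using nzb[OF z] by simp
      define X where "X = (1 + a*z)/(1 - a*z)"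
      define Y where "Y = (1 + b*z)/(1 - b*z)"
      have pz: "p z = (X + Y) / 2" by (simp add: p_def X_def Y_def)
      have "p z * ((1 - a * z) * (1 - b * z))
          = (X * (1 - a*z) * (1 - b * z) + Y * (1 - b*z) * (1 - a * z)) / 2"
        unfolding pz by (simp add: field_simps)
      thus ?thesis unfolding X_def Y_def e1 e2 .
    qed
    also have "\<dots> = 1 - (a * b) * z^2" by (simp add: field_simps power2_eq_square)
    finally show ?thesis unfolding den using ab by simp
  qed
  note rc = rat_coeffs[OF holp eq]
  obtain f where A: "A_beta \<beta> f"
    and t2: "taylor_coeff f 2 = fps_nth (fps_expansion p 0) 1 / (2 - of_real \<beta>)"
    and t3: "taylor_coeff f 3 = fps_nth (fps_expansion p 0) 2 / (3 - 2 * of_real \<beta>)"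
    using exists_f[OF b0 b1 holp p0 re] by blast
  have cB: "(2 - of_real \<beta> :: complex) = of_real B" by (simp add: B_def)
  have cT: "(3 - 2 * of_real \<beta> :: complex) = of_real T" by (simp add: T_def)
  have P1: "fps_nth (fps_expansion p 0) 1 = of_real (2 * t)" using rc(2) by simp
  have P2: "fps_nth (fps_expansion p 0) 2 = of_real (4 * t^2 - 2)"
    using rc(3) by (simp add: power2_eq_square algebra_simps)
  have a2: "taylor_coeff f 2 = of_real (2 * t / B)"
    unfolding t2 P1 cB by (simp only: of_real_divide)
  have a3: "taylor_coeff f 3 = of_real ((4 * t^2 - 2) / T)"
    unfolding t3 P2 cT by (simp only: of_real_divide)
  have g1: "log_gamma1 f = of_real (t / B)" by (simp add: log_gamma1_def a2)
  have g2: "log_gamma2 f = of_real (((4 * t^2 - 2) / T - (2 * t / B)^2 / 2) / 2)"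
    by (simp add: log_gamma2_def a2 a3)
  have z2: "((4 * t^2 - 2) / T - (2 * t / B)^2 / 2) / 2 = 0"
  proof -
    have "(2 * t / B)^2 / 2 = 2 / s" using B0 s0 by (simp add: power_divide tt field_simps)
    moreover have "(4 * t^2 - 2) / T = 2 / s"
      using B0 s0 T0 by (simp add: tt sBT field_simps)
    ultimately show ?thesis by simp
  qed
  have "t / B = 1 / r" using B0 r0 by (simp add: t_def)
  hence "cmod (log_gamma2 f) - cmod (log_gamma1 f) = - 1 / r"
    unfolding g1 g2 z2 using r0 by (simp only: norm_of_real) simp
  thus ?thesis using A by (auto simp: r_def s_def)
qed


theorem theorem4p1:
  fixes \<beta> :: real
  assumes "0 \<le> \<beta>" and "\<beta> \<le> 1"
  shows "(\<forall>f. A_beta \<beta> f \<longrightarrow>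
            - 1 / sqrt (5 - 6 * \<beta> + 2 * \<beta>^2) \<le> cmod (log_gamma2 f) - cmod (log_gamma1 f) \<and>
            cmod (log_gamma2 f) - cmod (log_gamma1 f) \<le> 1 / (3 - 2 * \<beta>))
       \<and> (\<exists>f. A_beta \<beta> f \<and> cmod (log_gamma2 f) - cmod (log_gamma1 f) = 1 / (3 - 2 * \<beta>))
       \<and> (\<exists>f. A_beta \<beta> f \<and>
            cmod (log_gamma2 f) - cmod (log_gamma1 f) = - 1 / sqrt (5 - 6 * \<beta> + 2 * \<beta>^2))"
proof (intro conjI)
  show "\<forall>f. A_beta \<beta> f \<longrightarrow>
            - 1 / sqrt (5 - 6 * \<beta> + 2 * \<beta>^2) \<le> cmod (log_gamma2 f) - cmod (log_gamma1 f) \<and>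
            cmod (log_gamma2 f) - cmod (log_gamma1 f) \<le> 1 / (3 - 2 * \<beta>)"
  proof (intro allI impI)
    fix f assume Af: "A_beta \<beta> f"
    obtain p where holp: "p holomorphic_on ball 0 1" and p0: "p 0 = 1"
      and re: "\<And>z. z \<in> ball 0 1 \<Longrightarrow> Re (p z) > 0"
      and P1: "fps_nth (fps_expansion p 0) 1 = (2 - of_real \<beta>) * taylor_coeff f 2"
      and P2: "fps_nth (fps_expansion p 0) 2 = (3 - 2 * of_real \<beta>) * taylor_coeff f 3"
      using A_beta_coeffs[OF Af] by blast
    have car: "norm (fps_nth (fps_expansion p 0) 2 - (fps_nth (fps_expansion p 0) 1)^2/2)
           \<le> 2 - norm (fps_nth (fps_expansion p 0) 1)^2/2"
      by (rule carath[OF holp p0 re])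
    from bounds[OF assms car P1 P2]
    show "- 1 / sqrt (5 - 6 * \<beta> + 2 * \<beta>^2) \<le> cmod (log_gamma2 f) - cmod (log_gamma1 f) \<and>
            cmod (log_gamma2 f) - cmod (log_gamma1 f) \<le> 1 / (3 - 2 * \<beta>)"
      by (simp only: log_gamma1_def log_gamma2_def)
  qed
  show "\<exists>f. A_beta \<beta> f \<and> cmod (log_gamma2 f) - cmod (log_gamma1 f) = 1 / (3 - 2 * \<beta>)"
    by (rule ext_upper[OF assms])
  show "\<exists>f. A_beta \<beta> f \<and>
            cmod (log_gamma2 f) - cmod (log_gamma1 f) = - 1 / sqrt (5 - 6 * \<beta> + 2 * \<beta>^2)"
    by (rule ext_lower[OF assms])
qed

end
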